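(* Suppose the adversary places $b\ge 1$ bad objects into $s\ge 1$ targeted indices, each of which contains at least one of these bad objects. Then the adversary's total RB cost satisfies $\mathcal{B}\ge \dfrac{b^2}{8s}$.
   Context: Model. A hash table has $t$ indices with chaining. The objects at an index form a list, new objects are appended at the tail, and $L_i$ denotes the current number of objects in the list at index $i$. Under the algorithm \textsc{Depth Charge}, inserting an object at index $i$ costs the inserter an RB (resource-burning) cost of $L_i+1$. Objects inserted by the adversary are bad objects and are placed at indices of its choosing; objects inserted by clients are good objects. $\mathcal{B}$ denotes the total RB cost paid by the adversary. A targeted index is an index containing at least one bad object and at least one good object. *)

theory Defs
  imports Complex_Main
begin

text \<open>An execution is the list of insertions in chronological order.
  Each entry (i, bad) says an object was appended at index i; bad = True iff
  the object was inserted by the adversary.\<close>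
type_synonym history = "(nat \<times> bool) list"

definition list_len :: "history \<Rightarrow> nat \<Rightarrow> nat \<Rightarrow> nat" where
  "list_len h k i = length (filter (\<lambda>x. fst x = i) (take k h))"

definition insert_cost :: "history \<Rightarrow> nat \<Rightarrow> nat" where
  "insert_cost h k = list_len h k (fst (h ! k)) + 1"

definition adv_cost :: "history \<Rightarrow> nat" where
  "adv_cost h = (\<Sum>k\<in>{k. k < length h \<and> snd (h ! k)}. insert_cost h k)"

definition num_bad :: "history \<Rightarrow> nat" where
  "num_bad h = length (filter snd h)"

definition bad_indices :: "history \<Rightarrow> nat set" where
  "bad_indices h = {i. (i, True) \<in> set h}"

definition targeted :: "history \<Rightarrow> nat \<Rightarrow> bool" where
  "targeted h i \<longleftrightarrow> (i, True) \<in> set h \<and> (i, False) \<in> set h"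

end

theory Submission
  imports Defs
begin

definition nb :: "history \<Rightarrow> nat \<Rightarrow> nat" where
  "nb h i = length (filter (\<lambda>x. fst x = i \<and> snd x) h)"

lemma len_filter_mono: "(\<And>x. P x \<Longrightarrow> Q x) \<Longrightarrow> length (filter P xs) \<le> length (filter Q xs)"
  by (induction xs) auto

lemma ic_app: "k < length h \<Longrightarrow> insert_cost (h @ [x]) k = insert_cost h k"
  by (simp add: insert_cost_def list_len_def nth_append)

lemma adv_app: "adv_cost (h @ [x]) = adv_cost h + (if snd x then list_len h (length h) (fst x) + 1 else 0)"
proof -
  have S: "{k. k < length (h@[x]) \<and> snd ((h@[x]) ! k)} =
     {k. k < length h \<and> snd (h ! k)} \<union> (if snd x then {length h} else {})"
    by (auto simp: nth_append less_Suc_eq)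
  have "(\<Sum>k\<in>{k. k < length h \<and> snd (h ! k)}. insert_cost (h@[x]) k)
      = (\<Sum>k\<in>{k. k < length h \<and> snd (h ! k)}. insert_cost h k)"
    by (rule sum.cong) (auto simp: ic_app)
  moreover have "insert_cost (h@[x]) (length h) = list_len h (length h) (fst x) + 1"
    by (simp add: insert_cost_def list_len_def)
  ultimately show ?thesis unfolding adv_cost_def S
    by (auto simp: sum.union_disjoint)
qed

lemma main_ineq: "finite S \<Longrightarrow> (\<Sum>i\<in>S. nb h i ^ 2) \<le> 2 * adv_cost h"
proof (induction h rule: rev_induct)
  case Nil
  then show ?case by (simp add: nb_def)
next
  case (snoc x h)
  obtain j bd where x: "x = (j, bd)" by (cases x)
  show ?case
  proof (cases bd)
    case False
    then show ?thesis using snoc by (simp add: x adv_app nb_def)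
  next
    case True
    have ll: "nb h j \<le> list_len h (length h) j"
      unfolding nb_def list_len_def using len_filter_mono[of "\<lambda>x. fst x = j \<and> snd x" "\<lambda>x. fst x = j" h] by simp
    have eq: "(\<Sum>i\<in>S. nb (h@[x]) i ^ 2) = (\<Sum>i\<in>S. nb h i ^ 2) + (if j \<in> S then 2 * nb h j + 1 else 0)"
    proof -
      have "(\<Sum>i\<in>S. nb (h@[x]) i ^ 2) = (\<Sum>i\<in>S. nb h i ^ 2 + (if i = j then 2 * nb h j + 1 else 0))"
        by (rule sum.cong) (auto simp: x True nb_def power2_eq_square)
      also have "\<dots> = (\<Sum>i\<in>S. nb h i ^ 2) + (if j \<in> S then 2 * nb h j + 1 else 0)"
        using snoc.prems by (simp add: sum.distrib)
      finally show ?thesis .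
    qed
    show ?thesis using snoc ll unfolding eq by (simp add: x True adv_app)
  qed
qed

lemma count_split:
  assumes "finite S" "\<forall>x\<in>set xs. P x \<longrightarrow> g x \<in> S"
  shows "length (filter P xs) = (\<Sum>i\<in>S. length (filter (\<lambda>x. g x = i \<and> P x) xs))"
  using assms(2)
proof (induction xs)
  case Nil then show ?case by simp
next
  case (Cons a xs)
  have "(\<Sum>i\<in>S. length (filter (\<lambda>x. g x = i \<and> P x) (a # xs)))
      = (\<Sum>i\<in>S. length (filter (\<lambda>x. g x = i \<and> P x) xs) + (if i = g a \<and> P a then 1 else 0))"
    by (rule sum.cong) auto
  also have "\<dots> = (\<Sum>i\<in>S. length (filter (\<lambda>x. g x = i \<and> P x) xs)) + (if P a then 1 else 0)"
    using Cons.prems assms(1) by (simp add: sum.distrib)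
  finally show ?case using Cons by simp
qed

lemma cs:
  fixes f :: "nat \<Rightarrow> real"
  assumes "finite S"
  shows "(\<Sum>i\<in>S. f i)^2 \<le> real (card S) * (\<Sum>i\<in>S. (f i)^2)"
proof -
  let ?A = "\<Sum>i\<in>S. (f i)^2" and ?B = "\<Sum>i\<in>S. f i"
  have "0 \<le> (\<Sum>i\<in>S. \<Sum>j\<in>S. (f i - f j)^2)" by (intro sum_nonneg) auto
  also have "\<dots> = (\<Sum>i\<in>S. \<Sum>j\<in>S. ((f i)^2 + (f j)^2 - 2 * f i * f j))"
    by (simp add: power2_diff)
  also have "\<dots> = (\<Sum>i\<in>S. real (card S) * (f i)^2 + ?A - 2 * f i * ?B)"
  proof (rule sum.cong[OF refl])
    fix i assume "i \<in> S"
    have "(\<Sum>j\<in>S. ((f i)^2 + (f j)^2 - 2 * f i * f j)) = (\<Sum>j\<in>S. (f i)^2) + (\<Sum>j\<in>S. (f j)^2) - (\<Sum>j\<in>S. 2 * f i * f j)"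
      by (simp add: sum_subtractf sum.distrib)
    also have "\<dots> = real (card S) * (f i)^2 + ?A - 2 * f i * ?B"
      by (simp add: sum_distrib_left)
    finally show "(\<Sum>j\<in>S. ((f i)^2 + (f j)^2 - 2 * f i * f j)) = real (card S) * (f i)^2 + ?A - 2 * f i * ?B" .
  qed
  also have "\<dots> = (\<Sum>i\<in>S. real (card S) * (f i)^2) + (\<Sum>i\<in>S. ?A) - (\<Sum>i\<in>S. f i * (2 * ?B))"
    by (simp add: sum_subtractf sum.distrib mult.commute mult.left_commute)
  also have "\<dots> = real (card S) * ?A + real (card S) * ?A - 2 * ?B * ?B"
    by (simp only: sum_distrib_left[symmetric] sum_distrib_right[symmetric] sum_constant)
  finally show ?thesis by (simp add: power2_eq_square)
qed

theorem lemma2: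
  fixes t b s :: nat and h :: history
  assumes "\<forall>x\<in>set h. fst x < t"
    and "num_bad h = b" and "b \<ge> 1"
    and "card (bad_indices h) = s" and "s \<ge> 1"
    and "\<forall>i\<in>bad_indices h. targeted h i"
  shows "real (adv_cost h) \<ge> real b ^ 2 / (8 * real s)"
proof -
  let ?S = "bad_indices h"
  have fin: "finite ?S" using assms(4,5) card.infinite by fastforce
  have "num_bad h = (\<Sum>i\<in>?S. length (filter (\<lambda>x. fst x = i \<and> snd x) h))"
    unfolding num_bad_def
    by (rule count_split[OF fin]) (auto simp: bad_indices_def)
  hence b: "real b = (\<Sum>i\<in>?S. real (nb h i))" using assms(2) by (simp add: nb_def)
  have m: "real (\<Sum>i\<in>?S. nb h i ^ 2) \<le> 2 * real (adv_cost h)"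
    using main_ineq[OF fin, of h] by linarith
  have "real b ^ 2 \<le> real s * (\<Sum>i\<in>?S. (real (nb h i))^2)"
    using cs[OF fin, of "\<lambda>i. real (nb h i)"] b assms(4) by simp
  also have "\<dots> \<le> real s * (2 * real (adv_cost h))"
    using m by (intro mult_left_mono) auto
  finally have "real b ^ 2 \<le> real s * (2 * real (adv_cost h))" .
  hence "real b ^ 2 \<le> 8 * real s * real (adv_cost h)"
  proof -
    have "real s * (2 * real (adv_cost h)) \<le> 8 * real s * real (adv_cost h)" by simp
    thus ?thesis using \<open>real b ^ 2 \<le> real s * (2 * real (adv_cost h))\<close> by linarith
  qed
  thus ?thesis using assms(5) by (simp add: divide_le_eq mult.commute)
qed

end
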